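(* (1) The sets $\Gamma$ and $\Gamma^\circ$ are positive invariant. (2) For every $x\in\mathbb{R}^2$, $\Gamma^\circ\subset L(x)$.
   Context: Fix $\alpha>\beta>0$. For $i\in\{0,1\}$ let $\Phi_i^t(x_1,x_2)=(i+(x_1-i)e^{-\alpha t},\, i+(x_2-i)e^{-\beta t})$, $t\in\mathbb{R}$, be the flow of the vector field $u_i(x_1,x_2)=(-\alpha(x_1-i),-\beta(x_2-i))$. For $n\ge1$, $(t_1,\dots,t_n)\in(0,\infty)^n$ and $i\in\{0,1\}$, let $\Phi_i^{(t_1,\dots,t_n)}=\Phi_i^{t_n}\circ\Phi_{1-i}^{t_{n-1}}\circ\Phi_i^{t_{n-2}}\circ\cdots$ (composition of $n$ flows with alternating indices, the last one applied being $\Phi_i^{t_n}$). A point $x$ is reachable from $y$ if $x=\Phi_i^{(t_1,\dots,t_n)}(y)$ for some $i\in\{0,1\}$, $n\in\mathbb{N}$ and $(t_1,\dots,t_n)\in(0,\infty)^n$; $L(y)$ is the set of points reachable from $y$. A nonempty set $S\subset\mathbb{R}^2$ is positive invariant if $L(y)\subset S$ for all $y\in S$ (equivalently $\Phi_i^t(x)\in S$ for all $i$, $t\ge0$, $x\in S$). Let $\Gamma=\{(x_1,x_2): 0\le x_2\le1,\ x_2^{\alpha/\beta}\le x_1\le 1-(1-x_2)^{\alpha/\beta}\}$ and $\Gamma^\circ$ its interior. *)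

theory Defs
  imports "HOL-Analysis.Analysis"
begin

definition Phi :: "real \<Rightarrow> real \<Rightarrow> nat \<Rightarrow> real \<Rightarrow> real \<times> real \<Rightarrow> real \<times> real" where
  "Phi \<alpha> \<beta> i t x = (real i + (fst x - real i) * exp (- \<alpha> * t),
                        real i + (snd x - real i) * exp (- \<beta> * t))"

text \<open>alt_flow i [t_n, t_(n-1), ..., t_1] = Phi_i^{t_n} o Phi_{1-i}^{t_(n-1)} o ... ;
  the head of the list is the time of the last flow applied.\<close>
fun alt_flow :: "real \<Rightarrow> real \<Rightarrow> nat \<Rightarrow> real list \<Rightarrow> real \<times> real \<Rightarrow> real \<times> real" where
  "alt_flow \<alpha> \<beta> i [] y = y"
| "alt_flow \<alpha> \<beta> i (t # ts) y = Phi \<alpha> \<beta> i t (alt_flow \<alpha> \<beta> (1 - i) ts y)"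

definition reachable :: "real \<Rightarrow> real \<Rightarrow> real \<times> real \<Rightarrow> real \<times> real \<Rightarrow> bool" where
  "reachable \<alpha> \<beta> x y \<longleftrightarrow>
     (\<exists>i ts. i \<in> {0, 1} \<and> ts \<noteq> [] \<and> (\<forall>t\<in>set ts. t > 0) \<and> x = alt_flow \<alpha> \<beta> i ts y)"

definition L :: "real \<Rightarrow> real \<Rightarrow> real \<times> real \<Rightarrow> (real \<times> real) set" where
  "L \<alpha> \<beta> y = {x. reachable \<alpha> \<beta> x y}"

definition positive_invariant :: "real \<Rightarrow> real \<Rightarrow> (real \<times> real) set \<Rightarrow> bool" where
  "positive_invariant \<alpha> \<beta> S \<longleftrightarrow> S \<noteq> {} \<and> (\<forall>y\<in>S. L \<alpha> \<beta> y \<subseteq> S)"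

definition Gamma :: "real \<Rightarrow> real \<Rightarrow> (real \<times> real) set" where
  "Gamma \<alpha> \<beta> = {(x1, x2). 0 \<le> x2 \<and> x2 \<le> 1 \<and> x2 powr (\<alpha> / \<beta>) \<le> x1
                          \<and> x1 \<le> 1 - (1 - x2) powr (\<alpha> / \<beta>)}"

end

theory Submission
  imports Defs
begin

lemma exp_pow:
  assumes "(\<beta>::real) > 0"
  shows "exp (- \<alpha> * t) = exp (- \<beta> * t) powr (\<alpha> / \<beta>)"
  using assms by (simp add: powr_def)

lemma Phi_s:
  assumes "(\<beta>::real) > 0"
  shows "Phi \<alpha> \<beta> i t x = (real i + (fst x - real i) * exp (- \<beta> * t) powr (\<alpha>/\<beta>),
                           real i + (snd x - real i) * exp (- \<beta> * t))"
proof -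
  have e: "exp (- \<beta> * t) powr (\<alpha>/\<beta>) = exp (- \<alpha> * t)" by (rule exp_pow[OF assms, symmetric])
  show ?thesis by (simp only: Phi_def e)
qed

lemma Phi_b:
  assumes "(\<beta>::real) > 0" "0 < b" "b < 1"
  shows "\<exists>t>0. Phi \<alpha> \<beta> i t x = (real i + (fst x - real i) * b powr (\<alpha>/\<beta>),
                           real i + (snd x - real i) * b)"
proof (intro exI conjI)
  let ?t = "- ln b / \<beta>"
  have "ln b < 0" using assms by simp
  then show "?t > 0" using assms by (simp add: divide_neg_pos)
  have "exp (- \<beta> * ?t) = b" using assms by simp
  then show "Phi \<alpha> \<beta> i ?t x = (real i + (fst x - real i) * b powr (\<alpha>/\<beta>),
                           real i + (snd x - real i) * b)"
    using Phi_s[OF assms(1)] by metis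
qed

lemma Gamma_mem: "(a, b) \<in> Gamma \<alpha> \<beta> \<longleftrightarrow> 0 \<le> b \<and> b \<le> 1 \<and> b powr (\<alpha> / \<beta>) \<le> a
                          \<and> a \<le> 1 - (1 - b) powr (\<alpha> / \<beta>)"
  by (simp add: Gamma_def)

lemma step0:
  fixes p s x1 x2 :: real
  assumes p: "p \<ge> 1" and s: "0 < s" "s \<le> 1" and x: "0 \<le> x2" "x2 \<le> 1" "x2 powr p \<le> x1"
    "x1 \<le> 1 - (1 - x2) powr p"
  shows "0 \<le> x2 * s \<and> x2 * s \<le> 1 \<and> (x2 * s) powr p \<le> x1 * s powr p
     \<and> x1 * s powr p \<le> 1 - (1 - x2 * s) powr p"
proof -
  have x1: "0 \<le> x1" using x(3) powr_ge_zero order_trans by blast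
  have cv: "(1 - x2 * s) powr p \<le> s * (1 - x2) powr p + (1 - s)"
  proof (cases "x2 = 1")
    case True
    have "(1 - s) powr p \<le> (1 - s) powr 1" using p s by (intro powr_mono') auto
    then show ?thesis using True s by simp
  next
    case False
    have A: "((1 - s) *\<^sub>R 1 + s *\<^sub>R (1 - x2)) powr p \<le> (1 - s) * 1 powr p + s * (1 - x2) powr p"
      using convex_onD[OF powr_convex[OF p], of s 1 "1 - x2"] s x False by auto
    have B: "(1 - s) *\<^sub>R (1::real) + s *\<^sub>R (1 - x2) = 1 - x2 * s" by (simp add: algebra_simps)
    show ?thesis using A unfolding B by simp
  qed
  have sp: "s powr p \<le> s" using powr_mono'[of 1 p s] p s by simp
  have "x1 * s powr p \<le> x1 * s" by (rule mult_left_mono[OF sp x1])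
  also have "\<dots> \<le> s * (1 - (1 - x2) powr p)" using x(4) s by (simp add: mult.commute mult_left_mono)
  also have "\<dots> \<le> 1 - (1 - x2 * s) powr p" using cv by (simp add: algebra_simps)
  finally have u: "x1 * s powr p \<le> 1 - (1 - x2 * s) powr p" .
  have "(x2 * s) powr p \<le> x1 * s powr p" using x by (simp add: powr_mult mult_right_mono)
  moreover have "x2 * s \<le> 1" using x s by (simp add: mult_le_one)
  ultimately show ?thesis using u x s by simp
qed


lemma Gamma_sym: "(1 - a, 1 - b) \<in> Gamma \<alpha> \<beta> \<longleftrightarrow> (a, b) \<in> Gamma \<alpha> \<beta>"
  unfolding Gamma_mem by auto

lemma Phi_Gamma:
  assumes ab: "\<beta> > 0" "\<alpha> \<ge> \<beta>" and i: "i \<le> 1" and t: "t \<ge> 0" and x: "x \<in> Gamma \<alpha> \<beta>"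
  shows "Phi \<alpha> \<beta> i t x \<in> Gamma \<alpha> \<beta>"
proof -
  obtain x1 x2 where xx: "x = (x1, x2)" by (cases x)
  define s where "s = exp (- \<beta> * t)"
  define p where "p = \<alpha> / \<beta>"
  have p: "p \<ge> 1" using ab by (simp add: p_def)
  have s: "0 < s" "s \<le> 1" using ab t by (auto simp: s_def)
  have P: "Phi \<alpha> \<beta> i t x = (real i + (x1 - real i) * s powr p, real i + (x2 - real i) * s)"
    using Phi_s[OF ab(1)] by (simp add: xx s_def p_def)
  show ?thesis
  proof (cases "i = 0")
    case True
    have "(x1, x2) \<in> Gamma \<alpha> \<beta>" using x xx by simp
    then have "0 \<le> x2 * s \<and> x2 * s \<le> 1 \<and> (x2 * s) powr p \<le> x1 * s powr p
     \<and> x1 * s powr p \<le> 1 - (1 - x2 * s) powr p"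
      by (intro step0[OF p s]) (auto simp: Gamma_mem p_def)
    then show ?thesis using True P by (simp add: Gamma_mem p_def mult.commute)
  next
    case False
    then have i1: "i = 1" using i by simp
    have "(1 - x1, 1 - x2) \<in> Gamma \<alpha> \<beta>" using x xx Gamma_sym by simp
    then have "0 \<le> (1 - x2) * s \<and> (1 - x2) * s \<le> 1 \<and> ((1 - x2) * s) powr p \<le> (1 - x1) * s powr p
     \<and> (1 - x1) * s powr p \<le> 1 - (1 - (1 - x2) * s) powr p"
      by (intro step0[OF p s]) (auto simp: Gamma_mem p_def)
    then have "(1 - (1 + (x1 - 1) * s powr p), 1 - (1 + (x2 - 1) * s)) \<in> Gamma \<alpha> \<beta>"
      by (simp add: Gamma_mem p_def algebra_simps)
    then have "(1 + (x1 - 1) * s powr p, 1 + (x2 - 1) * s) \<in> Gamma \<alpha> \<beta>"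
      using Gamma_sym by blast
    then show ?thesis using i1 P by simp
  qed
qed

lemma alt_Gamma:
  assumes ab: "\<beta> > 0" "\<alpha> \<ge> \<beta>"
  shows "\<forall>t\<in>set ts. t > 0 \<Longrightarrow> i \<le> 1 \<Longrightarrow> y \<in> Gamma \<alpha> \<beta> \<Longrightarrow> alt_flow \<alpha> \<beta> i ts y \<in> Gamma \<alpha> \<beta>"
proof (induction ts arbitrary: i)
  case Nil
  then show ?case by simp
next
  case (Cons t ts)
  have "alt_flow \<alpha> \<beta> (1 - i) ts y \<in> Gamma \<alpha> \<beta>" using Cons by simp
  then show ?case using Cons Phi_Gamma[OF ab] by simp
qed

lemma Phi_inv: "Phi \<alpha> \<beta> i t (Phi \<alpha> \<beta> i (-t) x) = x"
  by (simp add: Phi_def mult.assoc exp_add[symmetric])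

lemma Phi_cont: "continuous_on UNIV (Phi \<alpha> \<beta> i t)"
  unfolding Phi_def by (intro continuous_intros)

lemma Phi_interior:
  assumes ab: "\<beta> > 0" "\<alpha> \<ge> \<beta>" and i: "i \<le> 1" and t: "t \<ge> 0" and y: "y \<in> interior (Gamma \<alpha> \<beta>)"
  shows "Phi \<alpha> \<beta> i t y \<in> interior (Gamma \<alpha> \<beta>)"
proof (rule interiorI)
  let ?V = "Phi \<alpha> \<beta> i (-t) -` interior (Gamma \<alpha> \<beta>)"
  show "open ?V" by (intro open_vimage Phi_cont) simp
  show "Phi \<alpha> \<beta> i t y \<in> ?V" using y by (simp add: Phi_inv[of _ _ _ "-t", simplified])
  show "?V \<subseteq> Gamma \<alpha> \<beta>"
  proof
    fix v assume "v \<in> ?V"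
    then have "Phi \<alpha> \<beta> i (-t) v \<in> Gamma \<alpha> \<beta>" using interior_subset by blast
    then have "Phi \<alpha> \<beta> i t (Phi \<alpha> \<beta> i (-t) v) \<in> Gamma \<alpha> \<beta>" using Phi_Gamma[OF ab i t] by blast
    then show "v \<in> Gamma \<alpha> \<beta>" by (simp add: Phi_inv)
  qed
qed

lemma alt_interior:
  assumes ab: "\<beta> > 0" "\<alpha> \<ge> \<beta>"
  shows "\<forall>t\<in>set ts. t > 0 \<Longrightarrow> i \<le> 1 \<Longrightarrow> y \<in> interior (Gamma \<alpha> \<beta>) \<Longrightarrow> alt_flow \<alpha> \<beta> i ts y \<in> interior (Gamma \<alpha> \<beta>)"
proof (induction ts arbitrary: i)
  case Nil
  then show ?case by simp
next
  case (Cons t ts)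
  have "alt_flow \<alpha> \<beta> (1 - i) ts y \<in> interior (Gamma \<alpha> \<beta>)" using Cons by simp
  then show ?case using Cons Phi_interior[OF ab] by simp
qed


lemma interior_strict:
  assumes z: "z \<in> interior (Gamma \<alpha> \<beta>)"
  shows "0 < snd z \<and> snd z < 1 \<and> snd z powr (\<alpha>/\<beta>) < fst z \<and> fst z < 1 - (1 - snd z) powr (\<alpha>/\<beta>)"
proof -
  obtain z1 z2 where zz: "z = (z1, z2)" by (cases z)
  obtain e where e: "e > 0" "ball z e \<subseteq> Gamma \<alpha> \<beta>" using z mem_interior by blast
  have d1: "dist (z1, z2) (a, z2) = \<bar>z1 - a\<bar>" for a by (simp add: dist_Pair_Pair dist_real_def)
  have d2: "dist (z1, z2) (z1, b) = \<bar>z2 - b\<bar>" for b by (simp add: dist_Pair_Pair dist_real_def)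
  have "(z1, z2 - e/2) \<in> Gamma \<alpha> \<beta>" using e zz d2[of "z2 - e/2"] by (auto simp: subset_iff)
  then have 1: "0 < z2" using e by (simp add: Gamma_mem)
  have "(z1, z2 + e/2) \<in> Gamma \<alpha> \<beta>" using e zz d2[of "z2 + e/2"] by (auto simp: subset_iff)
  then have 2: "z2 < 1" using e by (simp add: Gamma_mem)
  have "(z1 - e/2, z2) \<in> Gamma \<alpha> \<beta>" using e zz d1[of "z1 - e/2"] by (auto simp: subset_iff)
  then have 3: "z2 powr (\<alpha>/\<beta>) < z1" using e by (simp add: Gamma_mem)
  have "(z1 + e/2, z2) \<in> Gamma \<alpha> \<beta>" using e zz d1[of "z1 + e/2"] by (auto simp: subset_iff)
  then have 4: "z1 < 1 - (1 - z2) powr (\<alpha>/\<beta>)" using e by (simp add: Gamma_mem)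
  show ?thesis using 1 2 3 4 zz by simp
qed

lemma interior_nonempty:
  assumes ab: "\<beta> > 0" "\<alpha> > \<beta>"
  shows "(1/2, 1/2) \<in> interior (Gamma \<alpha> \<beta>)"
proof -
  define p where "p = \<alpha> / \<beta>"
  have p: "p > 1" using ab by (simp add: p_def)
  let ?U = "snd -` {0<..<(1::real)}"
  let ?f = "\<lambda>x::real\<times>real. (fst x - snd x powr p, 1 - (1 - snd x) powr p - fst x)"
  let ?T = "?U \<inter> ?f -` ({0<..} \<times> {0<..})"
  have oU: "open ?U" by (intro open_vimage_snd) simp
  have cf: "continuous_on ?U ?f" by (intro continuous_intros) auto
  have oT: "open ?T" by (rule continuous_open_preimage[OF cf oU]) (intro open_Times; simp)
  have h: "(1/2::real) powr p < 1/2"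
  proof -
    have "2 powr 1 < (2::real) powr p" using p by (intro powr_less_mono) auto
    then show ?thesis by (simp add: powr_divide)
  qed
  have "(1/2, 1/2) \<in> ?T" using h by simp
  moreover have "?T \<subseteq> Gamma \<alpha> \<beta>" by (auto simp: Gamma_def p_def)
  ultimately show ?thesis using oT interiorI by blast
qed


lemma two_step:
  assumes ab: "\<beta> > 0" "\<alpha> > \<beta>"
    and z: "0 < z2" "z2 < 1" "z2 powr (\<alpha>/\<beta>) < z1"
    and b0: "0 < b0" "b0 < 1"
    and C1: "1 - (1 - snd w) * b0 > z2"
    and C2: "z2 powr (\<alpha>/\<beta>) * (1 - (1 - fst w) * b0 powr (\<alpha>/\<beta>)) > z1 * (1 - (1 - snd w) * b0) powr (\<alpha>/\<beta>)"
  shows "\<exists>s>0. \<exists>\<tau>>0. Phi \<alpha> \<beta> 0 \<tau> (Phi \<alpha> \<beta> 1 s w) = (z1, z2)"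
proof -
  define p where "p = \<alpha> / \<beta>"
  have p: "p > 0" using ab by (simp add: p_def)
  obtain w1 w2 where ww: "w = (w1, w2)" by (cases w)
  define D where "D b = 1 - (1 - w2) * b" for b
  have Dz: "D b > z2" if "0 \<le> b" "b \<le> b0" for b
  proof (cases "w2 \<le> 1")
    case True
    then have "(1 - w2) * b \<le> (1 - w2) * b0" using that by (intro mult_left_mono) auto
    then show ?thesis using C1 ww by (simp add: D_def)
  next
    case False
    then have "(w2 - 1) * b \<ge> 0" using that by simp
    then show ?thesis using z by (simp add: D_def algebra_simps)
  qed
  define F where "F b = z1 * D b powr p - z2 powr p * (1 - (1 - w1) * b powr p)" for b
  have c1: "continuous_on {0..b0} (\<lambda>b. b powr p)"
    by (rule continuous_on_powr') (auto intro: continuous_intros simp: p)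
  have c2: "continuous_on {0..b0} (\<lambda>b. D b powr p)"
  proof (rule continuous_on_powr)
    show "continuous_on {0..b0} D" unfolding D_def by (intro continuous_intros)
    show "\<forall>x\<in>{0..b0}. D x \<noteq> 0" using Dz z by force
  qed (intro continuous_intros)
  have cF: "continuous_on {0..b0} F"
    unfolding F_def by (intro continuous_intros c1 c2)
  have F0: "F 0 > 0" using z p by (simp add: F_def D_def p_def)
  have Fb0: "F b0 < 0" using C2 ww by (simp add: F_def D_def p_def)
  obtain b where b: "0 \<le> b" "b \<le> b0" "F b = 0"
    using IVT2'[of F b0 0 0, OF _ _ _ cF] F0 Fb0 b0 by auto
  have b': "0 < b" "b < 1" using b F0 Fb0 b0 by (auto simp: order.order_iff_strict)
  have Db: "D b > z2" using Dz b by simp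
  obtain s where s: "s > 0" "Phi \<alpha> \<beta> 1 s w = (1 + (w1 - 1) * b powr p, 1 + (w2 - 1) * b)"
    using Phi_b[OF ab(1) b', of \<alpha> 1 w] ww by (auto simp: p_def)
  define a where "a = z2 / D b"
  have a: "0 < a" "a < 1" using Db z by (auto simp: a_def)
  obtain \<tau> where \<tau>: "\<tau> > 0" "Phi \<alpha> \<beta> 0 \<tau> (Phi \<alpha> \<beta> 1 s w) =
     ((1 + (w1 - 1) * b powr p) * a powr p, (1 + (w2 - 1) * b) * a)"
    using Phi_b[OF ab(1) a, of \<alpha> 0 "Phi \<alpha> \<beta> 1 s w"] s by (auto simp: p_def)
  have DD: "1 + (w2 - 1) * b = D b" by (simp add: D_def algebra_simps)
  have Dp: "D b powr p > 0" using Db z by simp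
  have e2: "(1 + (w2 - 1) * b) * a = z2" using Db z by (simp add: DD a_def)
  have "z1 * D b powr p = z2 powr p * (1 - (1 - w1) * b powr p)" using b(3) by (simp add: F_def)
  then have e1: "(1 + (w1 - 1) * b powr p) * a powr p = z1"
    using Dp by (simp add: a_def powr_divide field_simps)
  show ?thesis using s(1) \<tau> e1 e2 by auto
qed


lemma exp_neg_lim: "(c::real) > 0 \<Longrightarrow> ((\<lambda>t. exp (- c * t)) \<longlongrightarrow> 0) at_top"
  by (auto intro!: exp_at_bot[THEN filterlim_compose] filterlim_tendsto_pos_mult_at_top filterlim_ident
             simp: filterlim_uminus_at_bot)

lemma reach:
  assumes ab: "\<beta> > 0" "\<alpha> > \<beta>" and z: "z \<in> interior (Gamma \<alpha> \<beta>)"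
  shows "z \<in> L \<alpha> \<beta> x"
proof -
  define p where "p = \<alpha> / \<beta>"
  obtain z1 z2 where zz: "z = (z1, z2)" by (cases z)
  have zs: "0 < z2" "z2 < 1" "z2 powr p < z1" "z1 < 1 - (1 - z2) powr p"
    using interior_strict[OF z] zz by (auto simp: p_def)
  obtain x1 x2 where xx: "x = (x1, x2)" by (cases x)
  define c where "c = 1 / (2 + \<bar>x2\<bar>)"
  have c: "0 < c" "c < 1" by (auto simp: c_def)
  obtain T1 where T1: "T1 > 0" "Phi \<alpha> \<beta> 1 T1 x = (1 + (x1 - 1) * c powr p, 1 + (x2 - 1) * c)"
    using Phi_b[OF ab(1) c, of \<alpha> 1 x] xx by (auto simp: p_def)
  define y1 where "y1 = 1 + (x1 - 1) * c powr p"
  define y2 where "y2 = 1 + (x2 - 1) * c"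
  have y2: "y2 > 0"
  proof -
    have "y2 = (1 + \<bar>x2\<bar> + x2) / (2 + \<bar>x2\<bar>)" by (simp add: y2_def c_def field_simps)
    moreover have "1 + \<bar>x2\<bar> + x2 > 0" by linarith
    ultimately show ?thesis by simp
  qed
  define b0 where "b0 = 1 - z2"
  have b0: "0 < b0" "b0 < 1" using zs by (auto simp: b0_def)
  define G where "G T = z2 powr p * (1 - (1 - y1 * exp (- \<alpha> * T)) * b0 powr p)
      - z1 * (1 - (1 - y2 * exp (- \<beta> * T)) * b0) powr p" for T
  have lim: "(G \<longlongrightarrow> z2 powr p * (1 - (1 - y1 * 0) * b0 powr p) - z1 * (1 - (1 - y2 * 0) * b0) powr p) at_top"
    unfolding G_def using zs b0 ab
    by (intro tendsto_intros exp_neg_lim) (auto simp: b0_def)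
  have pos: "z2 powr p * (1 - (1 - y1 * 0) * b0 powr p) - z1 * (1 - (1 - y2 * 0) * b0) powr p > 0"
  proof -
    have "z2 powr p * (1 - b0 powr p) - z1 * z2 powr p = z2 powr p * (1 - (1 - z2) powr p - z1)"
      by (simp add: b0_def algebra_simps)
    moreover have "z2 powr p * (1 - (1 - z2) powr p - z1) > 0" using zs by simp
    ultimately show ?thesis by (simp add: b0_def)
  qed
  have "eventually (\<lambda>T. G T > 0) at_top" using order_tendstoD(1)[OF lim pos] .
  then obtain N where N: "\<And>T. T \<ge> N \<Longrightarrow> G T > 0" by (auto simp: eventually_at_top_linorder)
  define T where "T = max N 1"
  have T: "T > 0" "G T > 0" using N by (auto simp: T_def)
  define w where "w = Phi \<alpha> \<beta> 0 T (Phi \<alpha> \<beta> 1 T1 x)"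
  have ww: "w = (y1 * exp (- \<alpha> * T), y2 * exp (- \<beta> * T))"
    using T1 by (simp add: w_def Phi_def y1_def y2_def)
  have C1: "1 - (1 - snd w) * b0 > z2"
  proof -
    have "1 - (1 - snd w) * b0 - z2 = snd w * (1 - z2)" by (simp add: b0_def algebra_simps)
    moreover have "snd w * (1 - z2) > 0" using ww y2 zs by simp
    ultimately show ?thesis by simp
  qed
  have C2: "z2 powr (\<alpha>/\<beta>) * (1 - (1 - fst w) * b0 powr (\<alpha>/\<beta>)) > z1 * (1 - (1 - snd w) * b0) powr (\<alpha>/\<beta>)"
    using T(2) ww by (simp add: G_def p_def)
  obtain s \<tau> where st: "s > 0" "\<tau> > 0" "Phi \<alpha> \<beta> 0 \<tau> (Phi \<alpha> \<beta> 1 s w) = (z1, z2)"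
    using two_step[OF ab zs(1,2) _ b0 C1 C2] zs(3) by (auto simp: p_def)
  have "z = alt_flow \<alpha> \<beta> 0 [\<tau>, s, T, T1] x" using st zz by (simp add: w_def)
  then show ?thesis unfolding L_def reachable_def using st T T1
    by (intro CollectI exI[of _ 0] exI[of _ "[\<tau>, s, T, T1]"]) auto
qed

theorem lemma4p1:
  fixes \<alpha> \<beta> :: real
  assumes "\<alpha> > \<beta>" and "\<beta> > 0"
  shows "positive_invariant \<alpha> \<beta> (Gamma \<alpha> \<beta>)
       \<and> positive_invariant \<alpha> \<beta> (interior (Gamma \<alpha> \<beta>))
       \<and> (\<forall>x :: real \<times> real. interior (Gamma \<alpha> \<beta>) \<subseteq> L \<alpha> \<beta> x)"
proof (intro conjI allI)
  have ab: "\<beta> > 0" "\<alpha> \<ge> \<beta>" using assms by auto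
  have ne: "(1/2, 1/2) \<in> interior (Gamma \<alpha> \<beta>)" using interior_nonempty assms by blast
  show "positive_invariant \<alpha> \<beta> (Gamma \<alpha> \<beta>)"
    unfolding positive_invariant_def
  proof (intro conjI ballI subsetI)
    show "Gamma \<alpha> \<beta> \<noteq> {}" using ne interior_subset by blast
    fix y x assume y: "y \<in> Gamma \<alpha> \<beta>" and "x \<in> L \<alpha> \<beta> y"
    then obtain i ts where A: "i \<in> {0, 1}" and B: "\<forall>t\<in>set ts. t > 0" and C: "x = alt_flow \<alpha> \<beta> i ts y"
      by (auto simp: L_def reachable_def)
    have "i \<le> 1" using A by auto
    then show "x \<in> Gamma \<alpha> \<beta>" using alt_Gamma[OF ab B _ y] C by simp
  qed
  show "positive_invariant \<alpha> \<beta> (interior (Gamma \<alpha> \<beta>))"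
    unfolding positive_invariant_def
  proof (intro conjI ballI subsetI)
    show "interior (Gamma \<alpha> \<beta>) \<noteq> {}" using ne by blast
    fix y x assume y: "y \<in> interior (Gamma \<alpha> \<beta>)" and "x \<in> L \<alpha> \<beta> y"
    then obtain i ts where A: "i \<in> {0, 1}" and B: "\<forall>t\<in>set ts. t > 0" and C: "x = alt_flow \<alpha> \<beta> i ts y"
      by (auto simp: L_def reachable_def)
    have "i \<le> 1" using A by auto
    then show "x \<in> interior (Gamma \<alpha> \<beta>)" using alt_interior[OF ab B _ y] C by simp
  qed
  fix x :: "real \<times> real"
  show "interior (Gamma \<alpha> \<beta>) \<subseteq> L \<alpha> \<beta> x" using reach assms by blast
qed

end
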